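(* Let $(\mathcal M,\mathcal H,\mathcal P,\mathcal R)$ be a right pseudo-model category, and let $\mathcal C,\mathcal F,\mathcal W\subseteq\mathcal M$ be the classes of cofibrations, fibrations and weak equivalences of $\mathcal M$. Then the morphisms of $\mathcal P$ lying in $\mathcal C$ and in $\mathcal W$, respectively, are the cofibrations and weak equivalences of a model structure on $\mathcal P$, whose fibrations are the retracts of morphisms $\mathcal R(f)$ with $f\in\mathcal F$.
   Context: A right pseudo-model category $(\mathcal M,\mathcal H,\mathcal P,\mathcal R)$ consists of a model category $\mathcal M$, a full subcategory $\mathcal H\subseteq\mathcal M$ closed under finite limits and under weak equivalences in $\mathcal M$, and a full co-reflective subcategory $\mathcal P\subseteq\mathcal H$ with right adjoint $\mathcal R:\mathcal H\to\mathcal P$ to the inclusion, such that $\mathcal R$ maps cofibrations to cofibrations and weak equivalences to weak equivalences. A "model structure" on a category here means the data of cofibrations, fibrations and weak equivalences satisfying the model axioms (lifting, factorization, 2-out-of-3, retracts), without requiring the category to be finitely complete and cocomplete. *)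

theory Defs
  imports Main
begin

record ('o, 'a) cat =
  Ob  :: "'o set"
  Ar  :: "'a set"
  Dom :: "'a \<Rightarrow> 'o"
  Cod :: "'a \<Rightarrow> 'o"
  Cmp :: "'a \<Rightarrow> 'a \<Rightarrow> 'a"   (* Cmp C g f = g o f, defined when Cod f = Dom g *)
  Idt :: "'o \<Rightarrow> 'a"

definition hom :: "('o, 'a) cat \<Rightarrow> 'o \<Rightarrow> 'o \<Rightarrow> 'a set" where
  "hom C X Y = {f \<in> Ar C. Dom C f = X \<and> Cod C f = Y}"

definition category :: "('o, 'a) cat \<Rightarrow> bool" where
  "category C \<longleftrightarrow>
     (\<forall>f\<in>Ar C. Dom C f \<in> Ob C \<and> Cod C f \<in> Ob C) \<and>
     (\<forall>X\<in>Ob C. Idt C X \<in> hom C X X) \<and>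
     (\<forall>f\<in>Ar C. \<forall>g\<in>Ar C. Cod C f = Dom C g \<longrightarrow>
         Cmp C g f \<in> hom C (Dom C f) (Cod C g)) \<and>
     (\<forall>f\<in>Ar C. Cmp C (Idt C (Cod C f)) f = f \<and> Cmp C f (Idt C (Dom C f)) = f) \<and>
     (\<forall>f\<in>Ar C. \<forall>g\<in>Ar C. \<forall>h\<in>Ar C. Cod C f = Dom C g \<longrightarrow> Cod C g = Dom C h \<longrightarrow>
         Cmp C h (Cmp C g f) = Cmp C (Cmp C h g) f)"

definition full_sub :: "('o, 'a) cat \<Rightarrow> 'o set \<Rightarrow> ('o, 'a) cat" where
  "full_sub C S = C\<lparr>Ob := S, Ar := {f \<in> Ar C. Dom C f \<in> S \<and> Cod C f \<in> S}\<rparr>"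

definition is_functor :: "('o1, 'a1) cat \<Rightarrow> ('o2, 'a2) cat \<Rightarrow> ('o1 \<Rightarrow> 'o2) \<Rightarrow> ('a1 \<Rightarrow> 'a2) \<Rightarrow> bool" where
  "is_functor A B Fo Fa \<longleftrightarrow>
     (\<forall>X\<in>Ob A. Fo X \<in> Ob B) \<and>
     (\<forall>f\<in>Ar A. Fa f \<in> hom B (Fo (Dom A f)) (Fo (Cod A f))) \<and>
     (\<forall>X\<in>Ob A. Fa (Idt A X) = Idt B (Fo X)) \<and>
     (\<forall>f\<in>Ar A. \<forall>g\<in>Ar A. Cod A f = Dom A g \<longrightarrow> Fa (Cmp A g f) = Cmp B (Fa g) (Fa f))"

text \<open>Finite index categories are taken with objects and arrows labelled by natural
  numbers (every finite category is isomorphic to such a one).\<close>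
definition finite_cat :: "(nat, nat) cat \<Rightarrow> bool" where
  "finite_cat J \<longleftrightarrow> category J \<and> finite (Ob J) \<and> finite (Ar J)"

definition cone :: "('o, 'a) cat \<Rightarrow> (nat, nat) cat \<Rightarrow> (nat \<Rightarrow> 'o) \<Rightarrow> (nat \<Rightarrow> 'a)
    \<Rightarrow> 'o \<Rightarrow> (nat \<Rightarrow> 'a) \<Rightarrow> bool" where
  "cone C J Fo Fa L lam \<longleftrightarrow> L \<in> Ob C \<and>
     (\<forall>j\<in>Ob J. lam j \<in> hom C L (Fo j)) \<and>
     (\<forall>u\<in>Ar J. Cmp C (Fa u) (lam (Dom J u)) = lam (Cod J u))"

definition limit_cone :: "('o, 'a) cat \<Rightarrow> (nat, nat) cat \<Rightarrow> (nat \<Rightarrow> 'o) \<Rightarrow> (nat \<Rightarrow> 'a)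
    \<Rightarrow> 'o \<Rightarrow> (nat \<Rightarrow> 'a) \<Rightarrow> bool" where
  "limit_cone C J Fo Fa L lam \<longleftrightarrow> cone C J Fo Fa L lam \<and>
     (\<forall>L' mu. cone C J Fo Fa L' mu \<longrightarrow>
        (\<exists>!h. h \<in> hom C L' L \<and> (\<forall>j\<in>Ob J. Cmp C (lam j) h = mu j)))"

definition cocone :: "('o, 'a) cat \<Rightarrow> (nat, nat) cat \<Rightarrow> (nat \<Rightarrow> 'o) \<Rightarrow> (nat \<Rightarrow> 'a)
    \<Rightarrow> 'o \<Rightarrow> (nat \<Rightarrow> 'a) \<Rightarrow> bool" where
  "cocone C J Fo Fa L lam \<longleftrightarrow> L \<in> Ob C \<and>
     (\<forall>j\<in>Ob J. lam j \<in> hom C (Fo j) L) \<and>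
     (\<forall>u\<in>Ar J. Cmp C (lam (Cod J u)) (Fa u) = lam (Dom J u))"

definition colimit_cocone :: "('o, 'a) cat \<Rightarrow> (nat, nat) cat \<Rightarrow> (nat \<Rightarrow> 'o) \<Rightarrow> (nat \<Rightarrow> 'a)
    \<Rightarrow> 'o \<Rightarrow> (nat \<Rightarrow> 'a) \<Rightarrow> bool" where
  "colimit_cocone C J Fo Fa L lam \<longleftrightarrow> cocone C J Fo Fa L lam \<and>
     (\<forall>L' mu. cocone C J Fo Fa L' mu \<longrightarrow>
        (\<exists>!h. h \<in> hom C L L' \<and> (\<forall>j\<in>Ob J. Cmp C h (lam j) = mu j)))"

definition finitely_complete :: "('o, 'a) cat \<Rightarrow> bool" where
  "finitely_complete C \<longleftrightarrow>
     (\<forall>J Fo Fa. finite_cat J \<and> is_functor J C Fo Fa \<longrightarrow> (\<exists>L lam. limit_cone C J Fo Fa L lam))"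

definition finitely_cocomplete :: "('o, 'a) cat \<Rightarrow> bool" where
  "finitely_cocomplete C \<longleftrightarrow>
     (\<forall>J Fo Fa. finite_cat J \<and> is_functor J C Fo Fa \<longrightarrow> (\<exists>L lam. colimit_cocone C J Fo Fa L lam))"

definition closed_fin_limits :: "('o, 'a) cat \<Rightarrow> 'o set \<Rightarrow> bool" where
  "closed_fin_limits C S \<longleftrightarrow>
     (\<forall>J Fo Fa L lam. finite_cat J \<and> is_functor J (full_sub C S) Fo Fa \<and>
        limit_cone C J Fo Fa L lam \<longrightarrow> L \<in> S)"

definition llp :: "('o, 'a) cat \<Rightarrow> 'a \<Rightarrow> 'a \<Rightarrow> bool" where
  "llp C i p \<longleftrightarrow>
     (\<forall>a b. a \<in> hom C (Dom C i) (Dom C p) \<and> b \<in> hom C (Cod C i) (Cod C p) \<and>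
        Cmp C p a = Cmp C b i \<longrightarrow>
        (\<exists>h\<in>hom C (Cod C i) (Dom C p). Cmp C h i = a \<and> Cmp C p h = b))"

definition retract :: "('o, 'a) cat \<Rightarrow> 'a \<Rightarrow> 'a \<Rightarrow> bool" where
  "retract C f g \<longleftrightarrow> f \<in> Ar C \<and> g \<in> Ar C \<and>
     (\<exists>s r s' r'. s \<in> hom C (Dom C f) (Dom C g) \<and> r \<in> hom C (Dom C g) (Dom C f) \<and>
        s' \<in> hom C (Cod C f) (Cod C g) \<and> r' \<in> hom C (Cod C g) (Cod C f) \<and>
        Cmp C r s = Idt C (Dom C f) \<and> Cmp C r' s' = Idt C (Cod C f) \<and>
        Cmp C g s = Cmp C s' f \<and> Cmp C f r = Cmp C r' g)"

definition model_structure :: "('o, 'a) cat \<Rightarrow> 'a set \<Rightarrow> 'a set \<Rightarrow> 'a set \<Rightarrow> bool" where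
  "model_structure C Cof Fib W \<longleftrightarrow> category C \<and>
     Cof \<subseteq> Ar C \<and> Fib \<subseteq> Ar C \<and> W \<subseteq> Ar C \<and>
     \<comment> \<open>2-out-of-3\<close>
     (\<forall>f\<in>Ar C. \<forall>g\<in>Ar C. Cod C f = Dom C g \<longrightarrow>
        ((f \<in> W \<and> g \<in> W \<longrightarrow> Cmp C g f \<in> W) \<and>
         (f \<in> W \<and> Cmp C g f \<in> W \<longrightarrow> g \<in> W) \<and>
         (g \<in> W \<and> Cmp C g f \<in> W \<longrightarrow> f \<in> W))) \<and>
     \<comment> \<open>retracts\<close>
     (\<forall>f g. retract C f g \<longrightarrow>
        (g \<in> Cof \<longrightarrow> f \<in> Cof) \<and> (g \<in> Fib \<longrightarrow> f \<in> Fib) \<and> (g \<in> W \<longrightarrow> f \<in> W)) \<and>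
     \<comment> \<open>lifting\<close>
     (\<forall>i\<in>Cof \<inter> W. \<forall>p\<in>Fib. llp C i p) \<and>
     (\<forall>i\<in>Cof. \<forall>p\<in>Fib \<inter> W. llp C i p) \<and>
     \<comment> \<open>factorization\<close>
     (\<forall>f\<in>Ar C. \<exists>i p. i \<in> Cof \<inter> W \<and> p \<in> Fib \<and> Cod C i = Dom C p \<and> Cmp C p i = f) \<and>
     (\<forall>f\<in>Ar C. \<exists>i p. i \<in> Cof \<and> p \<in> Fib \<inter> W \<and> Cod C i = Dom C p \<and> Cmp C p i = f)"

definition model_category :: "('o, 'a) cat \<Rightarrow> 'a set \<Rightarrow> 'a set \<Rightarrow> 'a set \<Rightarrow> bool" where
  "model_category C Cof Fib W \<longleftrightarrow> model_structure C Cof Fib W \<and>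
     finitely_complete C \<and> finitely_cocomplete C"

text \<open>(M, H, P, R): M a model category with classes Cof, Fib, W; H, P given by their
  object sets (full subcategories); R = (Ro, Ra) a is_functor H -> P which is right adjoint
  to the inclusion P -> H, the adjunction being witnessed by the counit eps.\<close>
definition right_pseudo_model_category ::
  "('o, 'a) cat \<Rightarrow> 'a set \<Rightarrow> 'a set \<Rightarrow> 'a set \<Rightarrow> 'o set \<Rightarrow> 'o set
     \<Rightarrow> ('o \<Rightarrow> 'o) \<Rightarrow> ('a \<Rightarrow> 'a) \<Rightarrow> ('o \<Rightarrow> 'a) \<Rightarrow> bool" where
  "right_pseudo_model_category M Cof Fib W H P Ro Ra eps \<longleftrightarrow>
     model_category M Cof Fib W \<and>
     H \<subseteq> Ob M \<and> closed_fin_limits M H \<and>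
     (\<forall>w\<in>W. Dom M w \<in> H \<longleftrightarrow> Cod M w \<in> H) \<and>
     P \<subseteq> H \<and>
     is_functor (full_sub M H) (full_sub M P) Ro Ra \<and>
     (\<forall>X\<in>H. eps X \<in> hom M (Ro X) X) \<and>
     (\<forall>f\<in>Ar (full_sub M H). Cmp M (eps (Cod M f)) (Ra f) = Cmp M f (eps (Dom M f))) \<and>
     (\<forall>X\<in>H. \<forall>Y\<in>P. \<forall>f\<in>hom M Y X. \<exists>!g. g \<in> hom M Y (Ro X) \<and> Cmp M (eps X) g = f) \<and>
     (\<forall>f\<in>Ar (full_sub M H). f \<in> Cof \<longrightarrow> Ra f \<in> Cof) \<and>
     (\<forall>f\<in>Ar (full_sub M H). f \<in> W \<longrightarrow> Ra f \<in> W)"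

end

theory Submission
  imports Defs
begin


lemma Ar_hom: "f \<in> Ar C \<Longrightarrow> f \<in> hom C (Dom C f) (Cod C f)"
  unfolding hom_def by auto

lemma homD: "f \<in> hom C X Y \<Longrightarrow> f \<in> Ar C \<and> Dom C f = X \<and> Cod C f = Y"
  unfolding hom_def by auto

lemma hom_ob: "category C \<Longrightarrow> f \<in> hom C X Y \<Longrightarrow> X \<in> Ob C \<and> Y \<in> Ob C"
  unfolding category_def hom_def by auto

lemma comp_hom: "category C \<Longrightarrow> f \<in> hom C X Y \<Longrightarrow> g \<in> hom C Y Z \<Longrightarrow> Cmp C g f \<in> hom C X Z"
  unfolding category_def hom_def by auto

lemma id_hom: "category C \<Longrightarrow> X \<in> Ob C \<Longrightarrow> Idt C X \<in> hom C X X"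
  unfolding category_def by auto

lemma id_left: "category C \<Longrightarrow> f \<in> hom C X Y \<Longrightarrow> Cmp C (Idt C Y) f = f"
  unfolding category_def hom_def by auto

lemma id_right: "category C \<Longrightarrow> f \<in> hom C X Y \<Longrightarrow> Cmp C f (Idt C X) = f"
  unfolding category_def hom_def by auto

lemma assoc: "category C \<Longrightarrow> f \<in> hom C V X \<Longrightarrow> g \<in> hom C X Y \<Longrightarrow> h \<in> hom C Y Z
   \<Longrightarrow> Cmp C h (Cmp C g f) = Cmp C (Cmp C h g) f"
  unfolding category_def hom_def by auto

lemma fs_simps[simp]: "Ob (full_sub C S) = S" "Ar (full_sub C S) = {f \<in> Ar C. Dom C f \<in> S \<and> Cod C f \<in> S}"
  "Dom (full_sub C S) = Dom C" "Cod (full_sub C S) = Cod C" "Cmp (full_sub C S) = Cmp C"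
  "Idt (full_sub C S) = Idt C"
  unfolding full_sub_def by auto

lemma hom_fs: "hom (full_sub C S) X Y = {f \<in> hom C X Y. X \<in> S \<and> Y \<in> S}"
  unfolding hom_def by auto

lemma category_fs: "category C \<Longrightarrow> S \<subseteq> Ob C \<Longrightarrow> category (full_sub C S)"
  unfolding category_def hom_fs by (auto simp: hom_def)

lemma retract_fs_D: "retract (full_sub C S) f g \<Longrightarrow> retract C f g"
  unfolding retract_def hom_fs by auto

lemma retract_fs_I: "retract C f g \<Longrightarrow> f \<in> Ar (full_sub C S) \<Longrightarrow> g \<in> Ar (full_sub C S)
   \<Longrightarrow> retract (full_sub C S) f g"
  unfolding retract_def hom_fs by auto

lemma llp_fs: "llp C i p \<Longrightarrow> i \<in> Ar (full_sub C S) \<Longrightarrow> p \<in> Ar (full_sub C S)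
   \<Longrightarrow> llp (full_sub C S) i p"
  unfolding llp_def hom_fs by auto

lemma retract_trans:
  assumes C: "category C" and 1: "retract C f g" and 2: "retract C g h"
  shows "retract C f h"
proof -
  obtain s1 r1 s1' r1' where a: "s1 \<in> hom C (Dom C f) (Dom C g)" "r1 \<in> hom C (Dom C g) (Dom C f)"
    "s1' \<in> hom C (Cod C f) (Cod C g)" "r1' \<in> hom C (Cod C g) (Cod C f)"
    "Cmp C r1 s1 = Idt C (Dom C f)" "Cmp C r1' s1' = Idt C (Cod C f)"
    "Cmp C g s1 = Cmp C s1' f" "Cmp C f r1 = Cmp C r1' g" and f: "f \<in> Ar C" and g: "g \<in> Ar C"
    using 1 unfolding retract_def by blast
  obtain s2 r2 s2' r2' where b: "s2 \<in> hom C (Dom C g) (Dom C h)" "r2 \<in> hom C (Dom C h) (Dom C g)"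
    "s2' \<in> hom C (Cod C g) (Cod C h)" "r2' \<in> hom C (Cod C h) (Cod C g)"
    "Cmp C r2 s2 = Idt C (Dom C g)" "Cmp C r2' s2' = Idt C (Cod C g)"
    "Cmp C h s2 = Cmp C s2' g" "Cmp C g r2 = Cmp C r2' h" and h: "h \<in> Ar C"
    using 2 unfolding retract_def by blast
  note fh = Ar_hom[OF f] and gh = Ar_hom[OF g] and hh = Ar_hom[OF h]
  have e1: "Cmp C (Cmp C r1 r2) (Cmp C s2 s1) = Idt C (Dom C f)"
  proof -
    have "Cmp C (Cmp C r1 r2) (Cmp C s2 s1) = Cmp C r1 (Cmp C r2 (Cmp C s2 s1))"
      using assoc[OF C comp_hom[OF C a(1) b(1)] b(2) a(2)] by simp
    also have "\<dots> = Cmp C r1 (Cmp C (Cmp C r2 s2) s1)" using assoc[OF C a(1) b(1) b(2)] by simp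
    also have "\<dots> = Cmp C r1 s1" using b(5) id_left[OF C a(1)] by simp
    finally show ?thesis using a(5) by simp
  qed
  have e2: "Cmp C (Cmp C r1' r2') (Cmp C s2' s1') = Idt C (Cod C f)"
  proof -
    have "Cmp C (Cmp C r1' r2') (Cmp C s2' s1') = Cmp C r1' (Cmp C r2' (Cmp C s2' s1'))"
      using assoc[OF C comp_hom[OF C a(3) b(3)] b(4) a(4)] by simp
    also have "\<dots> = Cmp C r1' (Cmp C (Cmp C r2' s2') s1')" using assoc[OF C a(3) b(3) b(4)] by simp
    also have "\<dots> = Cmp C r1' s1'" using b(6) id_left[OF C a(3)] by simp
    finally show ?thesis using a(6) by simp
  qed
  have e3: "Cmp C h (Cmp C s2 s1) = Cmp C (Cmp C s2' s1') f"
  proof -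
    have "Cmp C h (Cmp C s2 s1) = Cmp C (Cmp C h s2) s1" using assoc[OF C a(1) b(1) hh] .
    also have "\<dots> = Cmp C s2' (Cmp C g s1)" using b(7) assoc[OF C a(1) gh b(3)] by simp
    also have "\<dots> = Cmp C (Cmp C s2' s1') f" using a(7) assoc[OF C fh a(3) b(3)] by simp
    finally show ?thesis .
  qed
  have e4: "Cmp C f (Cmp C r1 r2) = Cmp C (Cmp C r1' r2') h"
  proof -
    have "Cmp C f (Cmp C r1 r2) = Cmp C (Cmp C f r1) r2" using assoc[OF C b(2) a(2) fh] .
    also have "\<dots> = Cmp C r1' (Cmp C g r2)" using a(8) assoc[OF C b(2) gh a(4)] by simp
    also have "\<dots> = Cmp C (Cmp C r1' r2') h" using b(8) assoc[OF C hh b(4) a(4)] by simp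
    finally show ?thesis .
  qed
  show ?thesis unfolding retract_def
    using f h e1 e2 e3 e4 comp_hom[OF C a(1) b(1)] comp_hom[OF C b(2) a(2)]
      comp_hom[OF C a(3) b(3)] comp_hom[OF C b(4) a(4)] by blast
qed

lemma retractI:
  "f \<in> Ar C \<Longrightarrow> g \<in> Ar C \<Longrightarrow> s \<in> hom C (Dom C f) (Dom C g) \<Longrightarrow> r \<in> hom C (Dom C g) (Dom C f) \<Longrightarrow>
   s' \<in> hom C (Cod C f) (Cod C g) \<Longrightarrow> r' \<in> hom C (Cod C g) (Cod C f) \<Longrightarrow>
   Cmp C r s = Idt C (Dom C f) \<Longrightarrow> Cmp C r' s' = Idt C (Cod C f) \<Longrightarrow>
   Cmp C g s = Cmp C s' f \<Longrightarrow> Cmp C f r = Cmp C r' g \<Longrightarrow> retract C f g"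
  unfolding retract_def by blast

lemma retract_Ar: "retract C f g \<Longrightarrow> f \<in> Ar C \<and> g \<in> Ar C"
  unfolding retract_def by (elim conjE) (rule conjI)

lemma llp_retract:
  assumes C: "category C" and L: "llp C i q" and R: "retract C p q" and i: "i \<in> Ar C"
  shows "llp C i p"
  unfolding llp_def
proof (intro allI impI)
  fix a b assume sq: "a \<in> hom C (Dom C i) (Dom C p) \<and> b \<in> hom C (Cod C i) (Cod C p) \<and> Cmp C p a = Cmp C b i"
  obtain s r s' r' where a: "s \<in> hom C (Dom C p) (Dom C q)" "r \<in> hom C (Dom C q) (Dom C p)"
    "s' \<in> hom C (Cod C p) (Cod C q)" "r' \<in> hom C (Cod C q) (Cod C p)"
    "Cmp C r s = Idt C (Dom C p)" "Cmp C r' s' = Idt C (Cod C p)"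
    "Cmp C q s = Cmp C s' p" "Cmp C p r = Cmp C r' q" and p: "p \<in> Ar C" and q: "q \<in> Ar C"
    using R unfolding retract_def by blast
  note ph = Ar_hom[OF p] and qh = Ar_hom[OF q] and ih = Ar_hom[OF i]
  have ah: "a \<in> hom C (Dom C i) (Dom C p)" and bh: "b \<in> hom C (Cod C i) (Cod C p)"
    and e: "Cmp C p a = Cmp C b i" using sq by auto
  have "Cmp C q (Cmp C s a) = Cmp C (Cmp C s' b) i"
  proof -
    have "Cmp C q (Cmp C s a) = Cmp C (Cmp C s' p) a" using assoc[OF C ah a(1) qh] a(7) by simp
    also have "\<dots> = Cmp C s' (Cmp C b i)" using assoc[OF C ah ph a(3)] e by simp
    also have "\<dots> = Cmp C (Cmp C s' b) i" using assoc[OF C ih bh a(3)] .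
    finally show ?thesis .
  qed
  then obtain h where h: "h \<in> hom C (Cod C i) (Dom C q)" "Cmp C h i = Cmp C s a" "Cmp C q h = Cmp C s' b"
    using L comp_hom[OF C ah a(1)] comp_hom[OF C bh a(3)] unfolding llp_def by blast
  have 1: "Cmp C (Cmp C r h) i = a"
  proof -
    have "Cmp C (Cmp C r h) i = Cmp C r (Cmp C s a)" using assoc[OF C ih h(1) a(2)] h(2) by simp
    also have "\<dots> = a" using assoc[OF C ah a(1) a(2)] a(5) id_left[OF C ah] by simp
    finally show ?thesis .
  qed
  have 2: "Cmp C p (Cmp C r h) = b"
  proof -
    have "Cmp C p (Cmp C r h) = Cmp C r' (Cmp C q h)" using assoc[OF C h(1) a(2) ph] a(8)
        assoc[OF C h(1) qh a(4)] by simp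
    also have "\<dots> = b" using h(3) assoc[OF C bh a(3) a(4)] a(6) id_left[OF C bh] by simp
    finally show ?thesis .
  qed
  show "\<exists>h\<in>hom C (Cod C i) (Dom C p). Cmp C h i = a \<and> Cmp C p h = b"
    using 1 2 comp_hom[OF C h(1) a(2)] by blast
qed




locale rpmc =
  fixes M :: "('o,'a) cat" and Cof Fib W H P Ro Ra eps
  assumes rp: "right_pseudo_model_category M Cof Fib W H P Ro Ra eps"
begin

lemma MS: "model_structure M Cof Fib W"
  using rp[unfolded right_pseudo_model_category_def model_category_def, THEN conjunct1, THEN conjunct1] .

lemmas MSu = MS[unfolded model_structure_def]
lemmas RPu = rp[unfolded right_pseudo_model_category_def]

lemma C: "category M" using MSu[THEN conjunct1] .

lemma subs: "Cof \<subseteq> Ar M" "Fib \<subseteq> Ar M" "W \<subseteq> Ar M"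
  using MSu[THEN conjunct2, THEN conjunct1] MSu[THEN conjunct2, THEN conjunct2, THEN conjunct1] MSu[THEN conjunct2, THEN conjunct2, THEN conjunct2, THEN conjunct1] by blast+

lemma two3: "f \<in> Ar M \<Longrightarrow> g \<in> Ar M \<Longrightarrow> Cod M f = Dom M g \<Longrightarrow>
        ((f \<in> W \<and> g \<in> W \<longrightarrow> Cmp M g f \<in> W) \<and>
         (f \<in> W \<and> Cmp M g f \<in> W \<longrightarrow> g \<in> W) \<and>
         (g \<in> W \<and> Cmp M g f \<in> W \<longrightarrow> f \<in> W))"
  using MSu[THEN conjunct2, THEN conjunct2, THEN conjunct2, THEN conjunct2, THEN conjunct1] by blast

lemma retr: "retract M f g \<Longrightarrow>
        (g \<in> Cof \<longrightarrow> f \<in> Cof) \<and> (g \<in> Fib \<longrightarrow> f \<in> Fib) \<and> (g \<in> W \<longrightarrow> f \<in> W)"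
  using MSu[THEN conjunct2, THEN conjunct2, THEN conjunct2, THEN conjunct2, THEN conjunct2, THEN conjunct1] by blast

lemma lift1: "i \<in> Cof \<inter> W \<Longrightarrow> p \<in> Fib \<Longrightarrow> llp M i p"
  using MSu[THEN conjunct2, THEN conjunct2, THEN conjunct2, THEN conjunct2, THEN conjunct2, THEN conjunct2, THEN conjunct1] by blast
lemma lift2: "i \<in> Cof \<Longrightarrow> p \<in> Fib \<inter> W \<Longrightarrow> llp M i p"
  using MSu[THEN conjunct2, THEN conjunct2, THEN conjunct2, THEN conjunct2, THEN conjunct2, THEN conjunct2, THEN conjunct2, THEN conjunct1] by blast
lemma fact1: "f \<in> Ar M \<Longrightarrow> \<exists>i p. i \<in> Cof \<inter> W \<and> p \<in> Fib \<and> Cod M i = Dom M p \<and> Cmp M p i = f"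
  using MSu[THEN conjunct2, THEN conjunct2, THEN conjunct2, THEN conjunct2, THEN conjunct2, THEN conjunct2, THEN conjunct2, THEN conjunct2, THEN conjunct1] by blast
lemma fact2: "f \<in> Ar M \<Longrightarrow> \<exists>i p. i \<in> Cof \<and> p \<in> Fib \<inter> W \<and> Cod M i = Dom M p \<and> Cmp M p i = f"
  using MSu[THEN conjunct2, THEN conjunct2, THEN conjunct2, THEN conjunct2, THEN conjunct2, THEN conjunct2, THEN conjunct2, THEN conjunct2, THEN conjunct2] by blast

lemma HM: "H \<subseteq> Ob M" using RPu[THEN conjunct2, THEN conjunct1] .
lemma PH: "P \<subseteq> H" using RPu[THEN conjunct2, THEN conjunct2, THEN conjunct2, THEN conjunct2, THEN conjunct1] .

lemma Wclosed: "w \<in> W \<Longrightarrow> Dom M w \<in> H \<longleftrightarrow> Cod M w \<in> H"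
  using RPu[THEN conjunct2, THEN conjunct2, THEN conjunct2, THEN conjunct1] by blast

lemma Rfun: "is_functor (full_sub M H) (full_sub M P) Ro Ra"
  using RPu[THEN conjunct2, THEN conjunct2, THEN conjunct2, THEN conjunct2, THEN conjunct2, THEN conjunct1] .

lemma RoP: "X \<in> H \<Longrightarrow> Ro X \<in> P"
  using Rfun unfolding is_functor_def by auto

lemma Ra_hom: "f \<in> hom M X Y \<Longrightarrow> X \<in> H \<Longrightarrow> Y \<in> H \<Longrightarrow> Ra f \<in> hom M (Ro X) (Ro Y)"
  using Rfun unfolding is_functor_def by (auto simp: hom_def)

lemma eps_hom: "X \<in> H \<Longrightarrow> eps X \<in> hom M (Ro X) X"
  using RPu[THEN conjunct2, THEN conjunct2, THEN conjunct2, THEN conjunct2, THEN conjunct2, THEN conjunct2, THEN conjunct1] by blast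

lemma nat: "f \<in> hom M X Y \<Longrightarrow> X \<in> H \<Longrightarrow> Y \<in> H \<Longrightarrow> Cmp M (eps Y) (Ra f) = Cmp M f (eps X)"
  using RPu[THEN conjunct2, THEN conjunct2, THEN conjunct2, THEN conjunct2, THEN conjunct2, THEN conjunct2, THEN conjunct2, THEN conjunct1] by (auto simp: hom_def)

lemma univU: "X \<in> H \<Longrightarrow> Y \<in> P \<Longrightarrow> f \<in> hom M Y X \<Longrightarrow> \<exists>!g. g \<in> hom M Y (Ro X) \<and> Cmp M (eps X) g = f"
  using RPu[THEN conjunct2, THEN conjunct2, THEN conjunct2, THEN conjunct2, THEN conjunct2, THEN conjunct2, THEN conjunct2, THEN conjunct2, THEN conjunct1] by blast

lemma univ: "X \<in> H \<Longrightarrow> Y \<in> P \<Longrightarrow> f \<in> hom M Y X \<Longrightarrow> \<exists>g. g \<in> hom M Y (Ro X) \<and> Cmp M (eps X) g = f"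
  using univU by (meson ex1_implies_ex)

lemma uniq: "X \<in> H \<Longrightarrow> Y \<in> P \<Longrightarrow> g1 \<in> hom M Y (Ro X) \<Longrightarrow> g2 \<in> hom M Y (Ro X)
   \<Longrightarrow> Cmp M (eps X) g1 = Cmp M (eps X) g2 \<Longrightarrow> g1 = g2"
proof -
  assume a: "X \<in> H" "Y \<in> P" "g1 \<in> hom M Y (Ro X)" "g2 \<in> hom M Y (Ro X)" "Cmp M (eps X) g1 = Cmp M (eps X) g2"
  have "Cmp M (eps X) g1 \<in> hom M Y X" using comp_hom[OF C a(3) eps_hom[OF a(1)]] .
  then obtain g where g: "\<And>y. y \<in> hom M Y (Ro X) \<and> Cmp M (eps X) y = Cmp M (eps X) g1 \<Longrightarrow> y = g"
    using univU[OF a(1,2)] by (metis (no_types, lifting))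
  show ?thesis using g[of g1] g[of g2] a(3,4,5) by simp
qed

lemma Ra_cof: "f \<in> hom M X Y \<Longrightarrow> X \<in> H \<Longrightarrow> Y \<in> H \<Longrightarrow> f \<in> Cof \<Longrightarrow> Ra f \<in> Cof"
  using RPu[THEN conjunct2, THEN conjunct2, THEN conjunct2, THEN conjunct2, THEN conjunct2, THEN conjunct2, THEN conjunct2, THEN conjunct2, THEN conjunct2, THEN conjunct1] by (auto simp: hom_def)
lemma Ra_W: "f \<in> hom M X Y \<Longrightarrow> X \<in> H \<Longrightarrow> Y \<in> H \<Longrightarrow> f \<in> W \<Longrightarrow> Ra f \<in> W"
  using RPu[THEN conjunct2, THEN conjunct2, THEN conjunct2, THEN conjunct2, THEN conjunct2, THEN conjunct2, THEN conjunct2, THEN conjunct2, THEN conjunct2, THEN conjunct2] by (auto simp: hom_def)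

lemma iso: assumes X: "X \<in> P"
  shows "\<exists>u. u \<in> hom M X (Ro X) \<and> Cmp M (eps X) u = Idt M X \<and> Cmp M u (eps X) = Idt M (Ro X)"
proof -
  have XH: "X \<in> H" using X PH by auto
  have XO: "X \<in> Ob M" using XH HM by auto
  obtain u where u: "u \<in> hom M X (Ro X)" "Cmp M (eps X) u = Idt M X"
    using univ[OF XH X id_hom[OF C XO]] by blast
  have e: "eps X \<in> hom M (Ro X) X" using eps_hom[OF XH] .
  have RX: "Ro X \<in> P" using RoP[OF XH] .
  have ROb: "Ro X \<in> Ob M" using RX PH HM by auto
  have "Cmp M u (eps X) = Idt M (Ro X)"
  proof (rule uniq[OF XH RX])
    show "Cmp M u (eps X) \<in> hom M (Ro X) (Ro X)" using comp_hom[OF C e u(1)] .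
    show "Idt M (Ro X) \<in> hom M (Ro X) (Ro X)" using id_hom[OF C ROb] .
    show "Cmp M (eps X) (Cmp M u (eps X)) = Cmp M (eps X) (Idt M (Ro X))"
      using assoc[OF C e u(1) e] u(2) id_left[OF C e] id_right[OF C e] by simp
  qed
  then show ?thesis using u by blast
qed

lemma lift_R:
  assumes i: "i \<in> hom M A B" and AP: "A \<in> P" and BP: "B \<in> P"
    and g: "g \<in> hom M X Y" and XH: "X \<in> H" and YH: "Y \<in> H" and L: "llp M i g"
  shows "llp M i (Ra g)"
  unfolding llp_def
proof (intro allI impI)
  fix a b assume sq: "a \<in> hom M (Dom M i) (Dom M (Ra g)) \<and> b \<in> hom M (Cod M i) (Cod M (Ra g)) \<and> Cmp M (Ra g) a = Cmp M b i"
  have Rg: "Ra g \<in> hom M (Ro X) (Ro Y)" using Ra_hom[OF g XH YH] .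
  have di: "Dom M i = A" "Cod M i = B" using homD[OF i] by auto
  have dg: "Dom M g = X" "Cod M g = Y" using homD[OF g] by auto
  have ah: "a \<in> hom M A (Ro X)" and bh: "b \<in> hom M B (Ro Y)" and e: "Cmp M (Ra g) a = Cmp M b i"
    using sq di homD[OF Rg] by auto
  have eX: "eps X \<in> hom M (Ro X) X" and eY: "eps Y \<in> hom M (Ro Y) Y" using eps_hom XH YH by auto
  have n: "Cmp M (eps Y) (Ra g) = Cmp M g (eps X)" using nat[OF g XH YH] .
  have sq1: "Cmp M g (Cmp M (eps X) a) = Cmp M (Cmp M (eps Y) b) i"
  proof -
    have "Cmp M g (Cmp M (eps X) a) = Cmp M (Cmp M (eps Y) (Ra g)) a" using assoc[OF C ah eX g] n by simp
    also have "\<dots> = Cmp M (eps Y) (Cmp M b i)" using assoc[OF C ah Rg eY] e by simp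
    also have "\<dots> = Cmp M (Cmp M (eps Y) b) i" using assoc[OF C i bh eY] .
    finally show ?thesis .
  qed
  obtain h where h: "h \<in> hom M B X" "Cmp M h i = Cmp M (eps X) a" "Cmp M g h = Cmp M (eps Y) b"
    using L sq1 comp_hom[OF C ah eX] comp_hom[OF C bh eY] di dg unfolding llp_def by auto
  obtain h' where h': "h' \<in> hom M B (Ro X)" "Cmp M (eps X) h' = h" using univ[OF XH BP h(1)] by blast
  have 1: "Cmp M h' i = a"
    by (rule uniq[OF XH AP comp_hom[OF C i h'(1)] ah]) (use assoc[OF C i h'(1) eX] h'(2) h(2) in simp)
  have 2: "Cmp M (Ra g) h' = b"
  proof (rule uniq[OF YH BP comp_hom[OF C h'(1) Rg] bh])
    have "Cmp M (eps Y) (Cmp M (Ra g) h') = Cmp M (Cmp M g (eps X)) h'" using assoc[OF C h'(1) Rg eY] n by simp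
    also have "\<dots> = Cmp M g h" using assoc[OF C h'(1) eX g] h'(2) by simp
    finally show "Cmp M (eps Y) (Cmp M (Ra g) h') = Cmp M (eps Y) b" using h(3) by simp
  qed
  show "\<exists>h\<in>hom M (Cod M i) (Dom M (Ra g)). Cmp M h i = a \<and> Cmp M (Ra g) h = b"
    using 1 2 h'(1) di homD[OF Rg] by auto
qed

lemma retract_j:
  assumes j: "j \<in> hom M A Z" and AP: "A \<in> P" and ZH: "Z \<in> H"
    and j': "j' \<in> hom M A (Ro Z)" "Cmp M (eps Z) j' = j"
  shows "retract M j' (Ra j)"
proof -
  have AH: "A \<in> H" using AP PH by auto
  obtain u where u: "u \<in> hom M A (Ro A)" "Cmp M (eps A) u = Idt M A" "Cmp M u (eps A) = Idt M (Ro A)"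
    using iso[OF AP] by blast
  have Rj: "Ra j \<in> hom M (Ro A) (Ro Z)" using Ra_hom[OF j AH ZH] .
  have eA: "eps A \<in> hom M (Ro A) A" and eZ: "eps Z \<in> hom M (Ro Z) Z" using eps_hom AH ZH by auto
  have ROZ: "Ro Z \<in> Ob M" using RoP[OF ZH] PH HM by auto
  have jj: "j' = Cmp M (Ra j) u"
  proof (rule uniq[OF ZH AP j'(1) comp_hom[OF C u(1) Rj]])
    have "Cmp M (eps Z) (Cmp M (Ra j) u) = Cmp M (Cmp M j (eps A)) u"
      using assoc[OF C u(1) Rj eZ] nat[OF j AH ZH] by simp
    also have "\<dots> = j" using assoc[OF C u(1) eA j] u(2) id_right[OF C j] by simp
    finally show "Cmp M (eps Z) j' = Cmp M (eps Z) (Cmp M (Ra j) u)" using j'(2) by simp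
  qed
  have idZ: "Idt M (Ro Z) \<in> hom M (Ro Z) (Ro Z)" using id_hom[OF C ROZ] .
  have c1: "Cmp M (Ra j) u = Cmp M (Idt M (Ro Z)) j'" using jj id_left[OF C j'(1)] by simp
  have c2: "Cmp M j' (eps A) = Cmp M (Idt M (Ro Z)) (Ra j)"
    using jj assoc[OF C eA u(1) Rj] u(3) id_right[OF C Rj] id_left[OF C Rj] by simp
  have c3: "Cmp M (Idt M (Ro Z)) (Idt M (Ro Z)) = Idt M (Ro Z)" using id_left[OF C idZ] .
  show ?thesis
    by (rule retractI[where s=u and r="eps A" and s'="Idt M (Ro Z)" and r'="Idt M (Ro Z)"])
      (use homD[OF j'(1)] homD[OF Rj] u eA idZ c1 c2 c3 in auto)
qed

lemma retract_p:
  assumes g: "g \<in> hom M Z B" and BP: "B \<in> P" and ZH: "Z \<in> H"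
  shows "retract M (Cmp M (eps B) (Ra g)) (Ra g)"
proof -
  have BH: "B \<in> H" using BP PH by auto
  obtain u where u: "u \<in> hom M B (Ro B)" "Cmp M (eps B) u = Idt M B" "Cmp M u (eps B) = Idt M (Ro B)"
    using iso[OF BP] by blast
  have Rg: "Ra g \<in> hom M (Ro Z) (Ro B)" using Ra_hom[OF g ZH BH] .
  have eB: "eps B \<in> hom M (Ro B) B" using eps_hom BH by auto
  have ROZ: "Ro Z \<in> Ob M" using RoP[OF ZH] PH HM by auto
  have idZ: "Idt M (Ro Z) \<in> hom M (Ro Z) (Ro Z)" using id_hom[OF C ROZ] .
  have p: "Cmp M (eps B) (Ra g) \<in> hom M (Ro Z) B" using comp_hom[OF C Rg eB] .
  have c1: "Cmp M (Ra g) (Idt M (Ro Z)) = Cmp M u (Cmp M (eps B) (Ra g))"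
    using id_right[OF C Rg] assoc[OF C Rg eB u(1)] u(3) id_left[OF C Rg] by simp
  have c2: "Cmp M (Cmp M (eps B) (Ra g)) (Idt M (Ro Z)) = Cmp M (eps B) (Ra g)"
    using id_right[OF C p] .
  have c3: "Cmp M (Idt M (Ro Z)) (Idt M (Ro Z)) = Idt M (Ro Z)" using id_left[OF C idZ] .
  show ?thesis
    by (rule retractI[where s="Idt M (Ro Z)" and r="Idt M (Ro Z)" and s'=u and r'="eps B"])
      (use homD[OF p] homD[OF Rg] u eB idZ c1 c2 c3 in auto)
qed

end

context rpmc begin

abbreviation "CP \<equiv> full_sub M P"
abbreviation "FibP \<equiv> {f. \<exists>g\<in>Fib \<inter> Ar (full_sub M H). retract CP f (Ra g)}"

lemma PO: "P \<subseteq> Ob M" using PH HM by auto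

lemma CP_cat: "category CP" using category_fs[OF C PO] .

lemma ArCP: "f \<in> Ar CP \<longleftrightarrow> (\<exists>X Y. f \<in> hom M X Y \<and> X \<in> P \<and> Y \<in> P)"
  by (auto simp: hom_def)

lemma factor_gen:
  assumes j: "j \<in> hom M A Z" and g: "g \<in> hom M Z B" and AP: "A \<in> P" and BP: "B \<in> P" and ZH: "Z \<in> H"
  shows "\<exists>j' p. j' \<in> hom M A (Ro Z) \<and> retract M j' (Ra j) \<and> p \<in> hom M (Ro Z) B \<and>
     retract M p (Ra g) \<and> Cmp M p j' = Cmp M g j"
proof -
  obtain j' where j': "j' \<in> hom M A (Ro Z)" "Cmp M (eps Z) j' = j" using univ[OF ZH AP j] by blast
  have BH: "B \<in> H" using BP PH by auto
  have Rg: "Ra g \<in> hom M (Ro Z) (Ro B)" using Ra_hom[OF g ZH BH] .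
  have eB: "eps B \<in> hom M (Ro B) B" and eZ: "eps Z \<in> hom M (Ro Z) Z" using eps_hom BH ZH by auto
  have p: "Cmp M (eps B) (Ra g) \<in> hom M (Ro Z) B" using comp_hom[OF C Rg eB] .
  have "Cmp M (Cmp M (eps B) (Ra g)) j' = Cmp M (Cmp M g (eps Z)) j'" using nat[OF g ZH BH] by simp
  also have "\<dots> = Cmp M g j" using assoc[OF C j'(1) eZ g] j'(2) by simp
  finally show ?thesis using j' p retract_j[OF j AP ZH j'] retract_p[OF g BP ZH] by blast
qed

lemma LP1:
  assumes i: "i \<in> Cof \<inter> W \<inter> Ar CP" and p: "p \<in> FibP"
  shows "llp CP i p"
proof -
  obtain g where g: "g \<in> Fib" "g \<in> Ar (full_sub M H)" and r: "retract CP p (Ra g)" using p by blast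
  have gh: "g \<in> hom M (Dom M g) (Cod M g)" "Dom M g \<in> H" "Cod M g \<in> H" using g(2) by (auto simp: hom_def)
  have ih: "i \<in> hom M (Dom M i) (Cod M i)" "Dom M i \<in> P" "Cod M i \<in> P" using i by (auto simp: hom_def)
  have "llp M i g" using lift1 i g(1) by blast
  then have "llp M i (Ra g)" using lift_R[OF ih gh] by blast
  moreover have "i \<in> Ar M" using i by auto
  ultimately have "llp M i p" using llp_retract[OF C _ retract_fs_D[OF r]] by blast
  moreover have iCP: "i \<in> Ar CP" using i by (rule IntD2)
  moreover have "p \<in> Ar CP" using retract_Ar[OF r] by blast
  ultimately show ?thesis by (rule llp_fs)
qed

end

context rpmc begin
lemma LP2:
  assumes i: "i \<in> Cof \<inter> Ar CP" and p: "p \<in> FibP \<inter> W \<inter> Ar CP"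
  shows "llp CP i p"
proof -
  have pA: "p \<in> Ar M" using p by auto
  define Cc Dd where "Cc = Dom M p" and "Dd = Cod M p"
  have ph: "p \<in> hom M Cc Dd" "Cc \<in> P" "Dd \<in> P" using p by (auto simp: hom_def Cc_def Dd_def)
  have CH: "Cc \<in> H" and DH: "Dd \<in> H" using ph PH by auto
  obtain j q where jq: "j \<in> Cof" "q \<in> Fib \<inter> W" "Cod M j = Dom M q" "Cmp M q j = p" using fact2[OF pA] by blast
  have jA: "j \<in> Ar M" and qA: "q \<in> Ar M" using jq subs by auto
  define Z where "Z = Cod M j"
  have cq: "Cmp M q j \<in> hom M (Dom M j) (Cod M q)" using comp_hom[OF C Ar_hom[OF jA]] Ar_hom[OF qA] jq(3) by simp
  have jh: "j \<in> hom M Cc Z" and qh: "q \<in> hom M Z Dd"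
    using cq jq(3,4) Ar_hom[OF jA] Ar_hom[OF qA] ph(1) unfolding Z_def by (auto simp: hom_def)
  have qW: "q \<in> W" using jq(2) by blast
  have pW: "p \<in> W" using p by blast
  have ZH: "Z \<in> H" using Wclosed[OF qW] DH homD[OF qh] by simp
  have jW: "j \<in> W" using two3[OF jA qA jq(3)] qW pW jq(4) by blast
  obtain j' where j': "j' \<in> hom M Cc (Ro Z)" "Cmp M (eps Z) j' = j" using univ[OF ZH ph(2) jh] by blast
  have rj: "retract M j' (Ra j)" using retract_j[OF jh ph(2) ZH j'] .
  have "Ra j \<in> Cof" "Ra j \<in> W" using Ra_cof[OF jh CH ZH] Ra_W[OF jh CH ZH] jq jW by auto
  then have j'CW: "j' \<in> Cof" "j' \<in> W" using retr[OF rj] by auto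
  have RZ: "Ro Z \<in> P" using RoP[OF ZH] .
  have j'CP: "j' \<in> Ar CP" using j' ph(2) RZ by (auto simp: hom_def)
  have pCP: "p \<in> Ar CP" using p by auto
  have L: "llp CP j' p" using LP1[of j' p] j'CW j'CP p by blast
  have eZ: "eps Z \<in> hom M (Ro Z) Z" using eps_hom ZH by auto
  have b0: "Cmp M q (eps Z) \<in> hom M (Ro Z) Dd" using comp_hom[OF C eZ qh] .
  have CO: "Cc \<in> Ob M" using ph(2) PO by auto
  have idC: "Idt M Cc \<in> hom M Cc Cc" using id_hom[OF C CO] .
  have sq: "Cmp M p (Idt M Cc) = Cmp M (Cmp M q (eps Z)) j'"
    using id_right[OF C ph(1)] assoc[OF C j'(1) eZ qh] j'(2) jq(4) by simp
  obtain r where r: "r \<in> hom M (Ro Z) Cc" "Cmp M r j' = Idt M Cc" "Cmp M p r = Cmp M q (eps Z)"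
  proof -
    have d: "Dom CP j' = Cc" "Cod CP j' = Ro Z" "Dom CP p = Cc" "Cod CP p = Dd"
      using homD[OF j'(1)] homD[OF ph(1)] by auto
    have "Idt M Cc \<in> hom CP (Dom CP j') (Dom CP p)" using idC ph(2) unfolding d hom_fs by simp
    moreover have "Cmp M q (eps Z) \<in> hom CP (Cod CP j') (Cod CP p)" using b0 RZ ph(3) unfolding d hom_fs by simp
    ultimately obtain r where "r \<in> hom CP (Cod CP j') (Dom CP p)" "Cmp CP r j' = Idt M Cc" "Cmp CP p r = Cmp M q (eps Z)"
      using L[unfolded llp_def, rule_format, of "Idt M Cc" "Cmp M q (eps Z)"] sq by auto
    then have "r \<in> hom M (Ro Z) Cc" "Cmp M r j' = Idt M Cc" "Cmp M p r = Cmp M q (eps Z)"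
      unfolding d hom_fs by auto
    then show ?thesis using that by blast
  qed
  have "llp M i p"
    unfolding llp_def
  proof (intro allI impI)
    fix a b assume sq2: "a \<in> hom M (Dom M i) (Dom M p) \<and> b \<in> hom M (Cod M i) (Cod M p) \<and> Cmp M p a = Cmp M b i"
    define A B where "A = Dom M i" and "B = Cod M i"
    have ih: "i \<in> hom M A B" "A \<in> P" "B \<in> P" using i by (auto simp: hom_def A_def B_def)
    have ah: "a \<in> hom M A Cc" and bh: "b \<in> hom M B Dd" and e: "Cmp M p a = Cmp M b i"
      using sq2 by (auto simp: A_def B_def Cc_def Dd_def)
    have "Cmp M q (Cmp M j a) = Cmp M b i" using assoc[OF C ah jh qh] jq(4) e by simp
    then obtain h where h: "h \<in> hom M B Z" "Cmp M h i = Cmp M j a" "Cmp M q h = b"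
      using lift2[of i q] i jq(2) comp_hom[OF C ah jh] bh homD[OF jh] homD[OF qh] homD[OF ih(1)]
      unfolding llp_def by force
    obtain h' where h': "h' \<in> hom M B (Ro Z)" "Cmp M (eps Z) h' = h" using univ[OF ZH ih(3) h(1)] by blast
    have hi: "Cmp M h' i = Cmp M j' a"
    proof (rule uniq[OF ZH ih(2) comp_hom[OF C ih(1) h'(1)] comp_hom[OF C ah j'(1)]])
      show "Cmp M (eps Z) (Cmp M h' i) = Cmp M (eps Z) (Cmp M j' a)"
        using assoc[OF C ih(1) h'(1) eZ] assoc[OF C ah j'(1) eZ] h'(2) h(2) j'(2) by simp
    qed
    have 1: "Cmp M (Cmp M r h') i = a"
    proof -
      have "Cmp M (Cmp M r h') i = Cmp M r (Cmp M h' i)" using assoc[OF C ih(1) h'(1) r(1)] by (rule sym)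
      also have "\<dots> = Cmp M r (Cmp M j' a)" using hi by (rule arg_cong)
      also have "\<dots> = Cmp M (Cmp M r j') a" using assoc[OF C ah j'(1) r(1)] .
      also have "\<dots> = Cmp M (Idt M Cc) a" using r(2) by (rule arg_cong)
      also have "\<dots> = a" using id_left[OF C ah] .
      finally show ?thesis .
    qed
    have 2: "Cmp M p (Cmp M r h') = b"
    proof -
      have "Cmp M p (Cmp M r h') = Cmp M (Cmp M p r) h'" using assoc[OF C h'(1) r(1) ph(1)] .
      also have "\<dots> = Cmp M (Cmp M q (eps Z)) h'" using r(3) by (rule arg_cong)
      also have "\<dots> = Cmp M q (Cmp M (eps Z) h')" using assoc[OF C h'(1) eZ qh] by (rule sym)
      also have "\<dots> = Cmp M q h" using h'(2) by (rule arg_cong)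
      finally show ?thesis using h(3) by simp
    qed
    show "\<exists>h\<in>hom M (Cod M i) (Dom M p). Cmp M h i = a \<and> Cmp M p h = b"
      using 1 2 comp_hom[OF C h'(1) r(1)] by (auto simp: B_def Cc_def)
  qed
  moreover have iCP: "i \<in> Ar CP" using i by (rule IntD2)
  ultimately show ?thesis using pCP by (rule llp_fs)
qed

end

context rpmc begin
lemma FACT:
  assumes f: "f \<in> Ar CP" and j: "j \<in> Ar M" and g: "g \<in> Ar M" and jg: "Cod M j = Dom M g" "Cmp M g j = f"
    and ZH: "(j \<in> W \<and> Dom M j \<in> H) \<or> (g \<in> W \<and> Cod M g \<in> H)"
  shows "\<exists>j' p. j' \<in> Ar CP \<and> retract M j' (Ra j) \<and> p \<in> Ar CP \<and> retract M p (Ra g) \<and>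
     retract CP p (Ra g) \<and> Ra g \<in> Ar CP \<and> g \<in> Ar (full_sub M H) \<and> j \<in> hom M (Dom M f) (Cod M j) \<and>
     Cod M j' = Dom M p \<and> Cmp M p j' = f"
proof -
  define A B Z where "A = Dom M f" and "B = Cod M f" and "Z = Cod M j"
  have fh: "f \<in> hom M A B" "A \<in> P" "B \<in> P" using f by (auto simp: hom_def A_def B_def)
  have cq: "Cmp M g j \<in> hom M (Dom M j) (Cod M g)" using comp_hom[OF C Ar_hom[OF j]] Ar_hom[OF g] jg(1) by simp
  have jh: "j \<in> hom M A Z" and gh: "g \<in> hom M Z B"
    using cq jg Ar_hom[OF j] Ar_hom[OF g] fh(1) unfolding Z_def by (auto simp: hom_def)
  have AH: "A \<in> H" and BH: "B \<in> H" using fh PH by auto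
  have ZH: "Z \<in> H" using ZH Wclosed[of j] Wclosed[of g] jh gh AH BH by (auto simp: hom_def)
  obtain j' p where jp: "j' \<in> hom M A (Ro Z)" "retract M j' (Ra j)" "p \<in> hom M (Ro Z) B"
     "retract M p (Ra g)" "Cmp M p j' = Cmp M g j" using factor_gen[OF jh gh fh(2,3) ZH] by blast
  have RZ: "Ro Z \<in> P" using RoP[OF ZH] .
  have RB: "Ro B \<in> P" using RoP[OF BH] .
  have Rg: "Ra g \<in> hom M (Ro Z) (Ro B)" using Ra_hom[OF gh ZH BH] .
  have rp: "retract CP p (Ra g)" using retract_fs_I[OF jp(4)] jp(3) Rg RZ RB fh(3) by (auto simp: hom_def)
  have 1: "j' \<in> Ar CP" using jp(1) RZ fh(2) by (auto simp: hom_def)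
  have 2: "p \<in> Ar CP" using jp(3) RZ fh(3) by (auto simp: hom_def)
  have 3: "Ra g \<in> Ar CP" using Rg RZ RB by (auto simp: hom_def)
  have 4: "g \<in> Ar (full_sub M H)" using gh ZH BH by (auto simp: hom_def)
  have 5: "j \<in> hom M (Dom M f) (Cod M j)" using jh by (simp add: A_def Z_def)
  have 6: "Cod M j' = Dom M p" using jp(1,3) by (simp add: hom_def)
  have 7: "Cmp M p j' = f" using jp(5) jg(2) by simp
  show ?thesis using 1 2 3 4 5 6 7 jp(2,4) rp by blast
qed

end

context rpmc begin
lemma t23: "f \<in> Ar CP \<Longrightarrow> g \<in> Ar CP \<Longrightarrow> Cod CP f = Dom CP g \<Longrightarrow>
        ((f \<in> W \<inter> Ar CP \<and> g \<in> W \<inter> Ar CP \<longrightarrow> Cmp CP g f \<in> W \<inter> Ar CP) \<and>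
         (f \<in> W \<inter> Ar CP \<and> Cmp CP g f \<in> W \<inter> Ar CP \<longrightarrow> g \<in> W \<inter> Ar CP) \<and>
         (g \<in> W \<inter> Ar CP \<and> Cmp CP g f \<in> W \<inter> Ar CP \<longrightarrow> f \<in> W \<inter> Ar CP))"
proof -
    assume f: "f \<in> Ar CP" and g: "g \<in> Ar CP" and c: "Cod CP f = Dom CP g"
    have gh: "g \<in> hom CP (Cod CP f) (Cod CP g)" unfolding c by (rule Ar_hom[OF g])
    have "Cmp CP g f \<in> hom CP (Dom CP f) (Cod CP g)" using comp_hom[OF CP_cat Ar_hom[OF f] gh] .
    then have cA: "Cmp CP g f \<in> Ar CP" by (rule homD[THEN conjunct1])
    have fM: "f \<in> Ar M" using f unfolding fs_simps by blast
    have gM: "g \<in> Ar M" using g unfolding fs_simps by blast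
    have cM: "Cod M f = Dom M g" using c unfolding fs_simps .
      have t: "(f \<in> W \<and> g \<in> W \<longrightarrow> Cmp CP g f \<in> W) \<and>
         (f \<in> W \<and> Cmp CP g f \<in> W \<longrightarrow> g \<in> W) \<and>
         (g \<in> W \<and> Cmp CP g f \<in> W \<longrightarrow> f \<in> W)" using two3[OF fM gM cM] unfolding fs_simps .
      show ?thesis using t f g cA by blast
qed
end

context rpmc begin
lemma main: "model_structure CP (Cof \<inter> Ar CP) FibP (W \<inter> Ar CP)"
  unfolding model_structure_def
proof (intro conjI)
  show "category CP" using CP_cat .
  show "Cof \<inter> Ar CP \<subseteq> Ar CP" "W \<inter> Ar CP \<subseteq> Ar CP" by blast+
  show "FibP \<subseteq> Ar CP"
  proof (rule subsetI)
    fix f assume "f \<in> FibP"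
    then obtain g where rg: "retract CP f (Ra g)" by blast
    show "f \<in> Ar CP" using retract_Ar[OF rg] by (rule conjunct1)
  qed
  show "\<forall>f\<in>Ar CP. \<forall>g\<in>Ar CP. Cod CP f = Dom CP g \<longrightarrow>
        ((f \<in> W \<inter> Ar CP \<and> g \<in> W \<inter> Ar CP \<longrightarrow> Cmp CP g f \<in> W \<inter> Ar CP) \<and>
         (f \<in> W \<inter> Ar CP \<and> Cmp CP g f \<in> W \<inter> Ar CP \<longrightarrow> g \<in> W \<inter> Ar CP) \<and>
         (g \<in> W \<inter> Ar CP \<and> Cmp CP g f \<in> W \<inter> Ar CP \<longrightarrow> f \<in> W \<inter> Ar CP))"
    using t23 by blast
  show "\<forall>f g. retract CP f g \<longrightarrow>
        (g \<in> Cof \<inter> Ar CP \<longrightarrow> f \<in> Cof \<inter> Ar CP) \<and> (g \<in> FibP \<longrightarrow> f \<in> FibP) \<and> (g \<in> W \<inter> Ar CP \<longrightarrow> f \<in> W \<inter> Ar CP)"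
  proof (intro allI impI conjI)
    fix f g assume r: "retract CP f g"
    have fA: "f \<in> Ar CP" using retract_Ar[OF r] by (rule conjunct1)
    show "g \<in> Cof \<inter> Ar CP \<Longrightarrow> f \<in> Cof \<inter> Ar CP" using retr[OF retract_fs_D[OF r]] fA by blast
    show "g \<in> W \<inter> Ar CP \<Longrightarrow> f \<in> W \<inter> Ar CP" using retr[OF retract_fs_D[OF r]] fA by blast
    show "g \<in> FibP \<Longrightarrow> f \<in> FibP" using retract_trans[OF CP_cat r] by blast
  qed
  show "\<forall>i\<in>Cof \<inter> Ar CP \<inter> (W \<inter> Ar CP). \<forall>p\<in>FibP. llp CP i p"
  proof (intro ballI)
    fix i p assume "i \<in> Cof \<inter> Ar CP \<inter> (W \<inter> Ar CP)" "p \<in> FibP"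
    moreover have "i \<in> Cof \<inter> Ar CP \<inter> (W \<inter> Ar CP) \<Longrightarrow> i \<in> Cof \<inter> W \<inter> Ar CP" by blast
    ultimately show "llp CP i p" using LP1 by blast
  qed
  show "\<forall>i\<in>Cof \<inter> Ar CP. \<forall>p\<in>FibP \<inter> (W \<inter> Ar CP). llp CP i p"
  proof (intro ballI)
    fix i p assume "i \<in> Cof \<inter> Ar CP" "p \<in> FibP \<inter> (W \<inter> Ar CP)"
    moreover have "p \<in> FibP \<inter> (W \<inter> Ar CP) \<Longrightarrow> p \<in> FibP \<inter> W \<inter> Ar CP" by blast
    ultimately show "llp CP i p" using LP2 by blast
  qed
  show "\<forall>f\<in>Ar CP. \<exists>i p. i \<in> Cof \<inter> Ar CP \<inter> (W \<inter> Ar CP) \<and> p \<in> FibP \<and> Cod CP i = Dom CP p \<and> Cmp CP p i = f"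
  proof
    fix f assume f: "f \<in> Ar CP"
    have fA: "f \<in> Ar M" and fP: "Dom M f \<in> P" "Cod M f \<in> P" using f unfolding fs_simps by blast+
    obtain j g where jg: "j \<in> Cof \<inter> W" "g \<in> Fib" "Cod M j = Dom M g" "Cmp M g j = f" using fact1[OF fA] by blast
    have jA: "j \<in> Ar M" and gA: "g \<in> Ar M" using jg subs by blast+
    have cj: "Cmp M g j \<in> hom M (Dom M j) (Cod M g)" using comp_hom[OF C Ar_hom[OF jA]] Ar_hom[OF gA] jg(3) by simp
    have "Dom M (Cmp M g j) = Dom M j" using homD[OF cj] by blast
    then have dfj: "Dom M f = Dom M j" unfolding jg(4) .
    have "Dom M j \<in> H" using fP(1) PH unfolding dfj by blast
    then have "j \<in> W \<and> Dom M j \<in> H" using jg(1) by blast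
    then obtain j' p where jp: "j' \<in> Ar CP" "retract M j' (Ra j)" "p \<in> Ar CP" "retract CP p (Ra g)"
      "g \<in> Ar (full_sub M H)" "j \<in> hom M (Dom M f) (Cod M j)" "Cod M j' = Dom M p" "Cmp M p j' = f"
      using FACT[OF f jA gA jg(3,4)] by blast
    have DH: "Dom M f \<in> H" using fP PH by blast
    have "Dom M g \<in> H" using jp(5) unfolding fs_simps by blast
    then have "Cod M j \<in> H" unfolding jg(3) .
    note DH = DH this
    have "Ra j \<in> Cof" "Ra j \<in> W" using Ra_cof[OF jp(6) DH] Ra_W[OF jp(6) DH] jg(1) by blast+
    then have "j' \<in> Cof" "j' \<in> W" using retr[OF jp(2)] by blast+
    then show "\<exists>i p. i \<in> Cof \<inter> Ar CP \<inter> (W \<inter> Ar CP) \<and> p \<in> FibP \<and> Cod CP i = Dom CP p \<and> Cmp CP p i = f"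
      unfolding fs_simps(3,4,5) using jp jg(2) by blast
  qed
  show "\<forall>f\<in>Ar CP. \<exists>i p. i \<in> Cof \<inter> Ar CP \<and> p \<in> FibP \<inter> (W \<inter> Ar CP) \<and> Cod CP i = Dom CP p \<and> Cmp CP p i = f"
  proof
    fix f assume f: "f \<in> Ar CP"
    have fA: "f \<in> Ar M" and fP: "Dom M f \<in> P" "Cod M f \<in> P" using f unfolding fs_simps by blast+
    obtain j g where jg: "j \<in> Cof" "g \<in> Fib \<inter> W" "Cod M j = Dom M g" "Cmp M g j = f" using fact2[OF fA] by blast
    have jA: "j \<in> Ar M" and gA: "g \<in> Ar M" using jg subs by blast+
    have cj: "Cmp M g j \<in> hom M (Dom M j) (Cod M g)" using comp_hom[OF C Ar_hom[OF jA]] Ar_hom[OF gA] jg(3) by simp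
    have "Cod M (Cmp M g j) = Cod M g" using homD[OF cj] by blast
    then have cfg: "Cod M f = Cod M g" unfolding jg(4) .
    have "Cod M g \<in> H" using fP(2) PH unfolding cfg by blast
    then have "g \<in> W \<and> Cod M g \<in> H" using jg(2) by blast
    then obtain j' p where jp: "j' \<in> Ar CP" "retract M j' (Ra j)" "p \<in> Ar CP" "retract M p (Ra g)" "retract CP p (Ra g)"
      "g \<in> Ar (full_sub M H)" "j \<in> hom M (Dom M f) (Cod M j)" "Cod M j' = Dom M p" "Cmp M p j' = f"
      using FACT[OF f jA gA jg(3,4)] by blast
    have DH: "Dom M f \<in> H" using fP PH by blast
    have "Dom M g \<in> H" using jp(6) unfolding fs_simps by blast
    then have "Cod M j \<in> H" unfolding jg(3) .
    note DH = DH this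
    have "Ra j \<in> Cof" using Ra_cof[OF jp(7) DH] jg(1) by blast
    then have j'C: "j' \<in> Cof" using retr[OF jp(2)] by blast
    have gh: "g \<in> hom M (Dom M g) (Cod M g)" "Dom M g \<in> H" "Cod M g \<in> H"
      using jp(6) unfolding fs_simps hom_def by blast+
    have "Ra g \<in> W" using Ra_W[OF gh] jg(2) by blast
    then have "p \<in> W" using retr[OF jp(4)] by blast
    then show "\<exists>i p. i \<in> Cof \<inter> Ar CP \<and> p \<in> FibP \<inter> (W \<inter> Ar CP) \<and> Cod CP i = Dom CP p \<and> Cmp CP p i = f"
      unfolding fs_simps(3,4,5) using jp jg(2) j'C by blast
  qed
qed
end

theorem mainTheorem2:
  fixes M :: "('o, 'a) cat"
  assumes "right_pseudo_model_category M Cof Fib W H P Ro Ra eps"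
  shows "model_structure (full_sub M P)
           (Cof \<inter> Ar (full_sub M P))
           {f. \<exists>g\<in>Fib \<inter> Ar (full_sub M H). retract (full_sub M P) f (Ra g)}
           (W \<inter> Ar (full_sub M P))"
proof -
  interpret rpmc M Cof Fib W H P Ro Ra eps using assms by (rule rpmc.intro)
  show ?thesis using main .
qed

end
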